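(* Let $H$ be an $r$-graph. Then $\Delta(i(P_{K_r^r,H}))\cong\mathrm{sd}\,\mathsf{B}_{\mathrm{edge}}(H)$ if and only if $H$ does not contain the complete $r$-partite sub-$r$-graph $K^r_{1,\dots,1,2,2}$, i.e. if and only if there do not exist pairwise disjoint sets $A_1,\dots,A_r\subseteq V(H)$ with $|A_1|=\dots=|A_{r-2}|=1$, $|A_{r-1}|=|A_r|=2$ such that $x_1\cdots x_r\in E(H)$ for every choice $x_j\in A_j$.
   Context: An $r$-graph $H$ consists of a vertex set $V(H)$ and a set $E(H)$ of $r$-element subsets of $V(H)$; an edge $\{v_1,\dots,v_r\}$ is written $v_1\cdots v_r$. $K_r^r$ is the $r$-graph on $\{1,\dots,r\}$ with the single edge $\{1,\dots,r\}$. $P_{K_r^r,H}$ is the poset of maps $f:\{1,\dots,r\}\to 2^{V(H)}\setminus\{\varnothing\}$ such that for every choice $x_j\in f(j)$ the $x_j$ are distinct and $x_1\cdots x_r\in E(H)$, ordered by $f\le g$ iff $f(j)\subseteq g(j)$ for all $j$. $\mathsf{B}_{\mathrm{edge}}(H)$ is the simplicial complex whose vertices are tuples $(v_1,\dots,v_r)\in V(H)^r$ with $v_1\cdots v_r\in E(H)$ and whose simplices are the sets $F$ of such tuples with $\mathrm{pr}_1(F),\dots,\mathrm{pr}_r(F)$ pairwise disjoint and $x_1\cdots x_r\in E(H)$ for every choice $x_j\in\mathrm{pr}_j(F)$. $\mathcal F(\mathsf{B}_{\mathrm{edge}}(H))$ denotes its poset of nonempty simplices ordered by inclusion, and $\mathrm{sd}\,\mathsf{B}_{\mathrm{edge}}(H)=\Delta(\mathcal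 F(\mathsf{B}_{\mathrm{edge}}(H)))$, where $\Delta(P)$ is the order complex (simplices = chains) of a poset $P$. The map $i:P_{K_r^r,H}\to\mathcal F(\mathsf{B}_{\mathrm{edge}}(H))$ is $i(\varphi)=\varphi(1)\times\cdots\times\varphi(r)$, and $i(P_{K_r^r,H})$ is its image, a subposet of $\mathcal F(\mathsf{B}_{\mathrm{edge}}(H))$. *)

theory Defs
  imports "HOL-Library.FuncSet"
begin

text \<open>An r-graph: finite vertex set V and edge set E of r-element subsets of V.
  Indices run over {1..r}; tuples and maps on {1..r} are extensional functions (PiE).\<close>

definition r_graph :: "nat \<Rightarrow> 'v set \<Rightarrow> 'v set set \<Rightarrow> bool" where
  "r_graph r V E \<longleftrightarrow> finite V \<and> (\<forall>e\<in>E. e \<subseteq> V \<and> card e = r)"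

text \<open>The poset P_{K_r^r,H} (as a set; ordered componentwise by inclusion).\<close>
definition P_K_H :: "nat \<Rightarrow> 'v set \<Rightarrow> 'v set set \<Rightarrow> (nat \<Rightarrow> 'v set) set" where
  "P_K_H r V E = {f. f \<in> (\<Pi>\<^sub>E j\<in>{1..r}. Pow V - {{}}) \<and>
      (\<forall>x\<in>(\<Pi>\<^sub>E j\<in>{1..r}. f j). inj_on x {1..r} \<and> x ` {1..r} \<in> E)}"

definition proj :: "nat \<Rightarrow> (nat \<Rightarrow> 'v) set \<Rightarrow> 'v set" where
  "proj j F = (\<lambda>t. t j) ` F"

definition B_edge_vertices :: "nat \<Rightarrow> 'v set \<Rightarrow> 'v set set \<Rightarrow> (nat \<Rightarrow> 'v) set" where
  "B_edge_vertices r V E = {t. t \<in> (\<Pi>\<^sub>E j\<in>{1..r}. V) \<and> t ` {1..r} \<in> E}"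

text \<open>Nonempty simplices of B_edge(H); this set is the face poset F(B_edge(H)).\<close>
definition B_edge :: "nat \<Rightarrow> 'v set \<Rightarrow> 'v set set \<Rightarrow> (nat \<Rightarrow> 'v) set set" where
  "B_edge r V E = {F. F \<noteq> {} \<and> finite F \<and> F \<subseteq> B_edge_vertices r V E \<and>
      (\<forall>j\<in>{1..r}. \<forall>k\<in>{1..r}. j \<noteq> k \<longrightarrow> proj j F \<inter> proj k F = {}) \<and>
      (\<forall>x\<in>(\<Pi>\<^sub>E j\<in>{1..r}. proj j F). x ` {1..r} \<in> E)}"

definition order_complex_incl :: "'a set set \<Rightarrow> 'a set set set" where
  "order_complex_incl P = {c. c \<noteq> {} \<and> finite c \<and> c \<subseteq> P \<and>
      (\<forall>x\<in>c. \<forall>y\<in>c. x \<subseteq> y \<or> y \<subseteq> x)}"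

definition i_map :: "nat \<Rightarrow> (nat \<Rightarrow> 'v set) \<Rightarrow> (nat \<Rightarrow> 'v) set" where
  "i_map r \<phi> = (\<Pi>\<^sub>E j\<in>{1..r}. \<phi> j)"

text \<open>Isomorphism of simplicial complexes given by their sets of nonempty simplices:
  a bijection of vertex sets mapping simplices exactly onto simplices.\<close>
definition simp_iso :: "'a set set \<Rightarrow> 'b set set \<Rightarrow> bool" where
  "simp_iso K L \<longleftrightarrow> (\<exists>f. bij_betw f (\<Union>K) (\<Union>L) \<and>
      (\<forall>S. S \<subseteq> \<Union>K \<longrightarrow> (S \<in> K \<longleftrightarrow> f ` S \<in> L)))"

definition contains_K11_22 :: "nat \<Rightarrow> 'v set \<Rightarrow> 'v set set \<Rightarrow> bool" where
  "contains_K11_22 r V E \<longleftrightarrow> (\<exists>A :: nat \<Rightarrow> 'v set.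
      (\<forall>j\<in>{1..r}. A j \<subseteq> V) \<and>
      (\<forall>j\<in>{1..r}. \<forall>k\<in>{1..r}. j \<noteq> k \<longrightarrow> A j \<inter> A k = {}) \<and>
      (\<forall>j\<in>{1..r-2}. card (A j) = 1) \<and> card (A (r-1)) = 2 \<and> card (A r) = 2 \<and>
      (\<forall>x\<in>(\<Pi>\<^sub>E j\<in>{1..r}. A j). x ` {1..r} \<in> E))"

end

theory Submission
  imports Defs
begin


lemma PiE_ne_ex: "\<forall>j\<in>I. \<phi> j \<noteq> {} \<Longrightarrow> \<exists>x. x \<in> Pi\<^sub>E I \<phi>"
  by (simp add: PiE_eq_empty_iff ex_in_conv)

lemma proj_PiE:
  assumes "\<forall>j\<in>I. \<phi> j \<noteq> {}" "j \<in> I"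
  shows "proj j (Pi\<^sub>E I \<phi>) = \<phi> j"
proof
  show "proj j (Pi\<^sub>E I \<phi>) \<subseteq> \<phi> j" using assms by (auto simp: proj_def PiE_mem)
  show "\<phi> j \<subseteq> proj j (Pi\<^sub>E I \<phi>)"
  proof
    fix a assume a: "a \<in> \<phi> j"
    from PiE_ne_ex[OF assms(1)] obtain x where x: "x \<in> Pi\<^sub>E I \<phi>" by blast
    have "x(j := a) \<in> Pi\<^sub>E I \<phi>" using x a assms(2) by (auto simp: PiE_iff extensional_def)
    then show "a \<in> proj j (Pi\<^sub>E I \<phi>)" unfolding proj_def by (auto intro!: image_eqI[where x="x(j:=a)"])
  qed
qed

lemma iP_sub:
  assumes "r_graph r V E"
  shows "i_map r ` P_K_H r V E \<subseteq> B_edge r V E"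
proof
  fix F assume "F \<in> i_map r ` P_K_H r V E"
  then obtain \<phi> where \<phi>: "\<phi> \<in> P_K_H r V E" and F: "F = Pi\<^sub>E {1..r} \<phi>" by (auto simp: i_map_def)
  have ne: "\<forall>j\<in>{1..r}. \<phi> j \<noteq> {}" and sub: "\<forall>j\<in>{1..r}. \<phi> j \<subseteq> V"
    and edge: "\<forall>x\<in>Pi\<^sub>E {1..r} \<phi>. inj_on x {1..r} \<and> x ` {1..r} \<in> E"
    using \<phi> by (auto simp: P_K_H_def PiE_iff)
  have fV: "finite V" using assms by (simp add: r_graph_def)
  have pr: "\<And>j. j \<in> {1..r} \<Longrightarrow> proj j F = \<phi> j" using proj_PiE[OF ne] F by simp
  have "F \<noteq> {}" using PiE_ne_ex[OF ne] F by blast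
  moreover have "finite F" unfolding F using sub fV by (intro finite_PiE) (blast intro: finite_subset)+
  moreover have "F \<subseteq> B_edge_vertices r V E" using edge sub unfolding F B_edge_vertices_def
    by (auto simp: PiE_iff)
  moreover have "\<forall>j\<in>{1..r}. \<forall>k\<in>{1..r}. j \<noteq> k \<longrightarrow> proj j F \<inter> proj k F = {}"
  proof (intro ballI impI)
    fix j k assume jk: "j \<in> {1..r}" "k \<in> {1..r}" "j \<noteq> k"
    show "proj j F \<inter> proj k F = {}"
    proof (rule ccontr)
      assume "proj j F \<inter> proj k F \<noteq> {}"
      then obtain a where a: "a \<in> \<phi> j" "a \<in> \<phi> k" using pr jk by auto
      obtain x where x: "x \<in> Pi\<^sub>E {1..r} \<phi>" using PiE_ne_ex[OF ne] by blast
      define y where "y = x(j := a, k := a)"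
      have "y \<in> Pi\<^sub>E {1..r} \<phi>" using x a jk by (auto simp: PiE_iff y_def extensional_def)
      then have "inj_on y {1..r}" using edge by blast
      moreover have "y j = y k" by (simp add: y_def)
      ultimately have "j = k" using jk(1,2) by (rule inj_onD)
      then show False using jk(3) by simp
    qed
  qed
  moreover have "\<forall>x\<in>(\<Pi>\<^sub>E j\<in>{1..r}. proj j F). x ` {1..r} \<in> E"
    using edge PiE_cong[of "{1..r}" "\<lambda>j. proj j F" \<phi>] pr F by auto
  ultimately show "F \<in> B_edge r V E" unfolding B_edge_def by blast
qed

lemma prod_in:
  assumes "F \<in> B_edge r V E"
  shows "Pi\<^sub>E {1..r} (\<lambda>j. proj j F) \<in> i_map r ` P_K_H r V E"
proof -
  define \<phi> where "\<phi> = restrict (\<lambda>j. proj j F) {1..r}"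
  have F: "F \<noteq> {}" "F \<subseteq> B_edge_vertices r V E"
    "\<forall>j\<in>{1..r}. \<forall>k\<in>{1..r}. j \<noteq> k \<longrightarrow> proj j F \<inter> proj k F = {}"
    "\<forall>x\<in>(\<Pi>\<^sub>E j\<in>{1..r}. proj j F). x ` {1..r} \<in> E" using assms by (auto simp: B_edge_def)
  have eq: "Pi\<^sub>E {1..r} \<phi> = Pi\<^sub>E {1..r} (\<lambda>j. proj j F)" unfolding \<phi>_def by (rule PiE_cong) simp
  have "\<phi> \<in> (\<Pi>\<^sub>E j\<in>{1..r}. Pow V - {{}})"
    using F(1,2) unfolding \<phi>_def by (auto simp: proj_def B_edge_vertices_def PiE_iff)
  moreover have "\<forall>x\<in>Pi\<^sub>E {1..r} \<phi>. inj_on x {1..r} \<and> x ` {1..r} \<in> E"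
  proof
    fix x assume x: "x \<in> Pi\<^sub>E {1..r} \<phi>"
    then have x': "x \<in> Pi\<^sub>E {1..r} (\<lambda>j. proj j F)" using eq by simp
    have "inj_on x {1..r}"
    proof (rule inj_onI, rule ccontr)
      fix j k assume jk: "j \<in> {1..r}" "k \<in> {1..r}" "x j = x k" "j \<noteq> k"
      have "x j \<in> proj j F" "x k \<in> proj k F" using x' jk PiE_mem by blast+
      moreover have "proj j F \<inter> proj k F = {}" using F(3) jk by blast
      ultimately show False using jk by auto
    qed
    then show "inj_on x {1..r} \<and> x ` {1..r} \<in> E" using F(4) x' by blast
  qed
  ultimately have P: "\<phi> \<in> P_K_H r V E" by (simp add: P_K_H_def)
  have "i_map r \<phi> = Pi\<^sub>E {1..r} (\<lambda>j. proj j F)" using eq by (simp add: i_map_def)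
  then show ?thesis using P by (metis image_eqI)
qed

lemma F_sub_prod:
  assumes "F \<subseteq> B_edge_vertices r V E"
  shows "F \<subseteq> Pi\<^sub>E {1..r} (\<lambda>j. proj j F)"
proof
  fix x assume x: "x \<in> F"
  then have "x \<in> extensional {1..r}" using assms by (auto simp: B_edge_vertices_def PiE_def)
  moreover have "\<forall>j\<in>{1..r}. x j \<in> proj j F" using x by (auto simp: proj_def)
  ultimately show "x \<in> Pi\<^sub>E {1..r} (\<lambda>j. proj j F)" by (simp add: PiE_iff)
qed

lemma in_iP:
  assumes "F \<in> i_map r ` P_K_H r V E"
  shows "F = Pi\<^sub>E {1..r} (\<lambda>j. proj j F)"
proof -
  obtain \<phi> where \<phi>: "\<phi> \<in> P_K_H r V E" and F: "F = Pi\<^sub>E {1..r} \<phi>" using assms by (auto simp: i_map_def)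
  have ne: "\<forall>j\<in>{1..r}. \<phi> j \<noteq> {}" using \<phi> by (auto simp: P_K_H_def PiE_iff)
  show ?thesis using proj_PiE[OF ne] F by (auto intro!: PiE_cong)
qed

lemma union_oc: "\<Union>(order_complex_incl P) = P"
proof
  show "\<Union>(order_complex_incl P) \<subseteq> P" unfolding order_complex_incl_def by blast
  show "P \<subseteq> \<Union>(order_complex_incl P)"
  proof
    fix p assume "p \<in> P"
    then have "{p} \<in> order_complex_incl P" unfolding order_complex_incl_def by simp
    then show "p \<in> \<Union>(order_complex_incl P)" by blast
  qed
qed


lemma two_big:
  assumes "F \<subseteq> Pi\<^sub>E {1..r} S" "F \<noteq> Pi\<^sub>E {1..r} S" "r \<ge> 2"
    and S: "\<And>m. m \<in> {1..r} \<Longrightarrow> S m = proj m F"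
  shows "\<exists>j\<in>{1..r}. \<exists>k\<in>{1..r}. j \<noteq> k \<and> (\<exists>u1 u2. u1 \<in> S j \<and> u2 \<in> S j \<and> u1 \<noteq> u2)
      \<and> (\<exists>v1 v2. v1 \<in> S k \<and> v2 \<in> S k \<and> v1 \<noteq> v2)"
proof (rule ccontr)
  assume na: "\<not> ?thesis"
  define big where "big m \<longleftrightarrow> (\<exists>u1 u2. u1 \<in> S m \<and> u2 \<in> S m \<and> u1 \<noteq> u2)" for m
  have na': "False" if "j\<in>{1..r}" "k\<in>{1..r}" "j\<noteq>k" "big j" "big k" for j k
    using na that unfolding big_def by blast
  obtain k where k: "k \<in> {1..r}" and sm: "\<And>m. m \<in> {1..r} \<Longrightarrow> m \<noteq> k \<Longrightarrow> \<not> big m"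
  proof (cases "\<exists>k\<in>{1..r}. big k")
    case True
    then obtain k where "k \<in> {1..r}" "big k" by blast
    then show ?thesis using na' that by metis
  next
    case False
    have "(1::nat) \<in> {1..r}" using assms(3) by simp
    moreover have "\<And>m. m \<in> {1..r} \<Longrightarrow> m \<noteq> 1 \<Longrightarrow> \<not> big m" using False by blast
    ultimately show ?thesis using that by blast
  qed
  have "\<not> Pi\<^sub>E {1..r} S \<subseteq> F" 
  proof
    assume "Pi\<^sub>E {1..r} S \<subseteq> F"
    with assms(1) have "F = Pi\<^sub>E {1..r} S" by (rule subset_antisym)
    with assms(2) show False by simp
  qed
  then obtain z where z: "z \<in> Pi\<^sub>E {1..r} S" "z \<notin> F" by (meson subsetI)
  have "z k \<in> proj k F" using z k S PiE_mem by blast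
  then obtain x where x: "x \<in> F" "x k = z k" by (auto simp: proj_def)
  have "x = z"
  proof (rule PiE_ext[OF _ z(1)])
    show "x \<in> Pi\<^sub>E {1..r} S" using x assms(1) by blast
    fix i assume i: "i \<in> {1..r}"
    show "x i = z i"
    proof (cases "i = k")
      case False
      have "x i \<in> S i" "z i \<in> S i" using \<open>x \<in> Pi\<^sub>E {1..r} S\<close> z(1) i PiE_mem by blast+
      then show ?thesis using sm[OF i False] unfolding big_def by blast
    qed (use x in simp)
  qed
  then show False using x z by simp
qed

lemma perm_ex:
  assumes "j \<in> {1..r}" "k \<in> {1..r}" "j \<noteq> k" "(r::nat) \<ge> 2"
  shows "\<exists>\<sigma>. bij_betw \<sigma> {1..r} {1..r} \<and> \<sigma> (r-1) = j \<and> \<sigma> r = k"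
proof -
  have c1: "card ({1..r} - {r-1,r}) = r - 2"
    using assms by (subst card_Diff_subset) auto
  have c2: "card ({1..r} - {j,k}) = r - 2"
    using assms by (subst card_Diff_subset) auto
  have "card ({1..r} - {r-1,r}) = card ({1..r} - {j,k})" using c1 c2 by simp
  then obtain g where g: "bij_betw g ({1..r} - {r-1,r}) ({1..r} - {j,k})"
    using finite_same_card_bij by (metis finite_Diff finite_atLeastAtMost)
  define \<sigma> where "\<sigma> i = (if i = r-1 then j else if i = r then k else g i)" for i
  have "bij_betw \<sigma> (({1..r} - {r-1,r}) \<union> {r-1,r}) (({1..r} - {j,k}) \<union> {j,k})"
  proof (rule bij_betw_combine)
    show "bij_betw \<sigma> ({1..r} - {r-1,r}) ({1..r} - {j,k})"
      using g by (rule bij_betw_cong[THEN iffD1, rotated]) (auto simp: \<sigma>_def)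
    show "bij_betw \<sigma> {r-1,r} {j,k}" using assms
      by (auto simp: bij_betw_def \<sigma>_def inj_on_def)
  qed auto
  moreover have "({1..r} - {r-1,r}) \<union> {r-1,r} = {1..r}" "({1..r} - {j,k}) \<union> {j,k} = {1..r}"
    using assms by auto
  ultimately show ?thesis using assms by (auto simp: \<sigma>_def intro!: exI[where x=\<sigma>])
qed

lemma bad_to_K:
  assumes "F \<in> B_edge r V E" "F \<noteq> Pi\<^sub>E {1..r} (\<lambda>j. proj j F)" "r \<ge> 2"
  shows "contains_K11_22 r V E"
proof -
  have F: "F \<noteq> {}" "F \<subseteq> B_edge_vertices r V E"
    "\<forall>j\<in>{1..r}. \<forall>k\<in>{1..r}. j \<noteq> k \<longrightarrow> proj j F \<inter> proj k F = {}"
    "\<forall>x\<in>(\<Pi>\<^sub>E j\<in>{1..r}. proj j F). x ` {1..r} \<in> E" using assms(1) by (auto simp: B_edge_def)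
  have sub: "F \<subseteq> Pi\<^sub>E {1..r} (\<lambda>j. proj j F)" using F(2) by (rule F_sub_prod)
  obtain j k u1 u2 v1 v2 where jk: "j \<in> {1..r}" "k \<in> {1..r}" "j \<noteq> k"
    and u: "u1 \<in> proj j F" "u2 \<in> proj j F" "u1 \<noteq> u2"
    and v: "v1 \<in> proj k F" "v2 \<in> proj k F" "v1 \<noteq> v2"
    using two_big[OF sub assms(2) assms(3) refl] by blast
  obtain \<sigma> where \<sigma>: "bij_betw \<sigma> {1..r} {1..r}" "\<sigma> (r-1) = j" "\<sigma> r = k"
    using perm_ex[OF jk assms(3)] by blast
  have inj: "inj_on \<sigma> {1..r}" and im: "\<sigma> ` {1..r} = {1..r}" using \<sigma>(1) by (auto simp: bij_betw_def)
  have sin: "\<And>i. i \<in> {1..r} \<Longrightarrow> \<sigma> i \<in> {1..r}" using im by blast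
  have ne: "\<And>m. proj m F \<noteq> {}" using F(1) by (auto simp: proj_def)
  define B where "B m = (if m = j then {u1,u2} else if m = k then {v1,v2} else {SOME a. a \<in> proj m F})" for m
  have BS: "B m \<subseteq> proj m F" for m
    using u v ne[of m] unfolding B_def by (auto intro: someI_ex)
  have projV: "proj m F \<subseteq> V" if "m \<in> {1..r}" for m
    using F(2) that by (auto simp: proj_def B_edge_vertices_def PiE_iff)
  define A where "A i = B (\<sigma> i)" for i
  have rr: "r - 1 \<in> {1..r}" "r \<in> {1..r}" "r - 1 \<noteq> r" using assms(3) by auto
  show ?thesis unfolding contains_K11_22_def
  proof (intro exI[of _ A] conjI ballI impI)
    fix i assume "i \<in> {1..r}"
    then show "A i \<subseteq> V" using BS projV sin unfolding A_def by blast
  next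
    fix i i' assume ii: "i \<in> {1..r}" "i' \<in> {1..r}" "i \<noteq> i'"
    have "\<sigma> i \<noteq> \<sigma> i'"
    proof
      assume "\<sigma> i = \<sigma> i'"
      then have "i = i'" by (rule inj_onD[OF inj _ ii(1) ii(2)])
      then show False using ii(3) by simp
    qed
    then have "proj (\<sigma> i) F \<inter> proj (\<sigma> i') F = {}" using F(3) sin ii by blast
    then show "A i \<inter> A i' = {}" using BS unfolding A_def by blast
  next
    fix i assume i: "i \<in> {1..r-2}"
    then have i': "i \<in> {1..r}" "i \<noteq> r - 1" "i \<noteq> r" by auto
    have "\<sigma> i \<noteq> j" using inj i' rr \<sigma>(2) by (metis inj_on_def)
    moreover have "\<sigma> i \<noteq> k" using inj i' rr \<sigma>(3) by (metis inj_on_def)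
    ultimately show "card (A i) = 1" unfolding A_def B_def by simp
  next
    show "card (A (r - 1)) = 2" using u(3) \<sigma>(2) unfolding A_def B_def by simp
  next
    show "card (A r) = 2" using v(3) \<sigma>(3) jk(3) unfolding A_def B_def by simp
  next
    fix x assume x: "x \<in> Pi\<^sub>E {1..r} A"
    define \<tau> where "\<tau> = inv_into {1..r} \<sigma>"
    have \<tau>: "bij_betw \<tau> {1..r} {1..r}" unfolding \<tau>_def using \<sigma>(1) by (rule bij_betw_inv_into)
    have \<tau>im: "\<tau> ` {1..r} = {1..r}" using \<tau> by (simp add: bij_betw_def)
    have st: "\<sigma> (\<tau> m) = m" if "m \<in> {1..r}" for m
      unfolding \<tau>_def using that im by (metis f_inv_into_f)
    define y where "y = restrict (\<lambda>m. x (\<tau> m)) {1..r}"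
    have "y \<in> Pi\<^sub>E {1..r} (\<lambda>j. proj j F)"
    proof -
      have "x (\<tau> m) \<in> proj m F" if "m \<in> {1..r}" for m
      proof -
        have "\<tau> m \<in> {1..r}" using \<tau>im that by blast
        then have "x (\<tau> m) \<in> A (\<tau> m)" using x PiE_mem by blast
        then show ?thesis using BS[of m] st[OF that] unfolding A_def by auto
      qed
      then show ?thesis unfolding y_def by simp
    qed
    then have "y ` {1..r} \<in> E" using F(4) by blast
    moreover have "y ` {1..r} = x ` {1..r}"
    proof -
      have "y ` {1..r} = (\<lambda>m. x (\<tau> m)) ` {1..r}" unfolding y_def by (rule image_cong) auto
      also have "\<dots> = x ` (\<tau> ` {1..r})" by (simp add: image_image)
      finally show ?thesis using \<tau>im by simp
    qed
    ultimately show "x ` {1..r} \<in> E" by simp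
  qed
qed


lemma K_to_bad:
  assumes "contains_K11_22 r V E" "r \<ge> 2"
  shows "\<exists>F\<in>B_edge r V E. F \<notin> i_map r ` P_K_H r V E"
proof -
  obtain A :: "nat \<Rightarrow> _" where AV: "\<forall>j\<in>{1..r}. A j \<subseteq> V"
    and Ad: "\<forall>j\<in>{1..r}. \<forall>k\<in>{1..r}. j \<noteq> k \<longrightarrow> A j \<inter> A k = {}"
    and A1: "\<forall>j\<in>{1..r-2}. card (A j) = 1" and A2: "card (A (r-1)) = 2" "card (A r) = 2"
    and AE: "\<forall>x\<in>(\<Pi>\<^sub>E j\<in>{1..r}. A j). x ` {1..r} \<in> E"
    using assms(1) unfolding contains_K11_22_def by blast
  obtain a a' where aa: "A (r-1) = {a,a'}" "a \<noteq> a'" using A2(1) by (meson card_2_iff)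
  obtain b b' where bb: "A r = {b,b'}" "b \<noteq> b'" using A2(2) by (meson card_2_iff)
  have rr: "r - 1 \<in> {1..r}" "r \<in> {1..r}" "r - 1 \<noteq> r" using assms(2) by auto
  have Ane: "A m \<noteq> {}" if "m \<in> {1..r}" for m
  proof (cases "m \<le> r - 2")
    case True
    then have "card (A m) = 1" using A1 that by auto
    then show ?thesis by auto
  next
    case False
    then have "m = r - 1 \<or> m = r" using that by auto
    then show ?thesis using aa bb by auto
  qed
  define c where "c m = (SOME c. c \<in> A m)" for m
  have cA: "c m \<in> A m" if "m \<in> {1..r}" for m
    unfolding c_def using Ane[OF that] by (simp add: some_in_eq)
  define x where "x = restrict (\<lambda>m. if m = r then b else if m = r-1 then a else c m) {1..r}"
  define y where "y = restrict (\<lambda>m. if m = r then b' else if m = r-1 then a' else c m) {1..r}"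
  have xA: "x \<in> Pi\<^sub>E {1..r} A" unfolding x_def using cA aa bb by auto
  have yA: "y \<in> Pi\<^sub>E {1..r} A" unfolding y_def using cA aa bb by auto
  define F where "F = {x, y}"
  have projA: "proj m F \<subseteq> A m" if "m \<in> {1..r}" for m
    using PiE_mem[OF xA that] PiE_mem[OF yA that] unfolding F_def proj_def by auto
  have FinB: "F \<in> B_edge r V E"
    unfolding B_edge_def
  proof (intro CollectI conjI ballI impI)
    show "F \<noteq> {}" "finite F" unfolding F_def by auto
    show "F \<subseteq> B_edge_vertices r V E"
    proof -
      have "z \<in> B_edge_vertices r V E" if "z \<in> Pi\<^sub>E {1..r} A" for z
      proof -
        have "z \<in> Pi\<^sub>E {1..r} (\<lambda>_. V)" using that AV by (auto simp: PiE_iff)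
        then show ?thesis using AE that by (simp add: B_edge_vertices_def)
      qed
      then show ?thesis using xA yA unfolding F_def by blast
    qed
  next
    fix j k assume "j \<in> {1..r}" "k \<in> {1..r}" "j \<noteq> k"
    then show "proj j F \<inter> proj k F = {}" using projA Ad by blast
  next
    fix z assume z: "z \<in> (\<Pi>\<^sub>E j\<in>{1..r}. proj j F)"
    have "z i \<in> A i" if "i \<in> {1..r}" for i using projA[OF that] PiE_mem[OF z that] by blast
    moreover have "z \<in> extensional {1..r}" using z by (simp add: PiE_def)
    ultimately have "z \<in> Pi\<^sub>E {1..r} A" by (simp add: PiE_iff)
    then show "z ` {1..r} \<in> E" using AE by blast
  qed
  have "F \<notin> i_map r ` P_K_H r V E"
  proof
    assume "F \<in> i_map r ` P_K_H r V E"
    then have Feq: "F = Pi\<^sub>E {1..r} (\<lambda>j. proj j F)" by (rule in_iP)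
    define z where "z = x(r := y r)"
    have xe: "x \<in> extensional {1..r}" using xA by (simp add: PiE_def)
    have "z \<in> Pi\<^sub>E {1..r} (\<lambda>j. proj j F)"
    proof -
      have "z \<in> extensional {1..r}" using xe rr unfolding z_def extensional_def by auto
      moreover have "z m \<in> proj m F" if "m \<in> {1..r}" for m
        unfolding z_def F_def proj_def by auto
      ultimately show ?thesis by (simp add: PiE_iff)
    qed
    then have "z \<in> F" using Feq by simp
    moreover have "z r \<noteq> x r" using rr bb unfolding z_def x_def y_def by auto
    moreover have "z (r-1) \<noteq> y (r-1)" using rr aa unfolding z_def x_def y_def by auto
    ultimately show False unfolding F_def by auto
  qed
  then show ?thesis using FinB by blast
qed

theorem mainTheorem3:
  fixes r :: nat and V :: "'v set" and E :: "'v set set"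
  assumes "r \<ge> 2" and "r_graph r V E"
  shows "simp_iso (order_complex_incl (i_map r ` P_K_H r V E))
                  (order_complex_incl (B_edge r V E))
         \<longleftrightarrow> \<not> contains_K11_22 r V E"
proof
  have sub: "i_map r ` P_K_H r V E \<subseteq> B_edge r V E" using assms(2) by (rule iP_sub)
  have fV: "finite V" using assms(2) by (simp add: r_graph_def)
  have "B_edge r V E \<subseteq> Pow (Pi\<^sub>E {1..r} (\<lambda>_. V))"
    by (auto simp: B_edge_def B_edge_vertices_def)
  moreover have "finite (Pow (Pi\<^sub>E {1..r} (\<lambda>_. V)))" using fV by (simp add: finite_PiE)
  ultimately have fin: "finite (B_edge r V E)" by (rule finite_subset)
  {
    assume iso: "simp_iso (order_complex_incl (i_map r ` P_K_H r V E))
                  (order_complex_incl (B_edge r V E))"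
    show "\<not> contains_K11_22 r V E"
    proof
      assume "contains_K11_22 r V E"
      from K_to_bad[OF this assms(1)] obtain F
        where "F \<in> B_edge r V E" "F \<notin> i_map r ` P_K_H r V E" by blast
      then have ps: "i_map r ` P_K_H r V E \<subset> B_edge r V E" using sub by blast
      from iso obtain f where "bij_betw f (i_map r ` P_K_H r V E) (B_edge r V E)"
        unfolding simp_iso_def union_oc by blast
      then have "card (i_map r ` P_K_H r V E) = card (B_edge r V E)" by (rule bij_betw_same_card)
      moreover have "card (i_map r ` P_K_H r V E) < card (B_edge r V E)"
        using fin ps by (rule psubset_card_mono)
      ultimately show False by simp
    qed
  }
  {
    assume nK: "\<not> contains_K11_22 r V E"
    have "B_edge r V E \<subseteq> i_map r ` P_K_H r V E"
    proof
      fix F assume F: "F \<in> B_edge r V E"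
      have "F = Pi\<^sub>E {1..r} (\<lambda>j. proj j F)" using bad_to_K[OF F _ assms(1)] nK by blast
      then show "F \<in> i_map r ` P_K_H r V E" using prod_in[OF F] by simp
    qed
    then have eq: "i_map r ` P_K_H r V E = B_edge r V E" using sub by blast
    show "simp_iso (order_complex_incl (i_map r ` P_K_H r V E))
                  (order_complex_incl (B_edge r V E))"
      unfolding simp_iso_def eq by (intro exI[of _ id]) simp
  }
qed


end
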